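(* Let $m\ge1$ and let $\pi$ be the right action of $G_{m,m}$ on $H_{2m+1}=\{0,1\}^{2m+1}$ described below. Then: (1) for every $k=0,\dots,m$, the subgroup $G_{m,k}=\langle a_1,\dots,a_{m+k+1}\rangle$ acts transitively on $H_{m+k+1}$; (2) each generator $a_i$, $i=1,\dots,2m+1$, acts as an involution on $H_{2m+1}$; (3) for every $v\in H_{2m+1}$ and every $i=1,\dots,2m+1$, $\pi(a_i)v$ differs from $v$ in exactly one coordinate (in particular $\pi(a_i)$ has no fixed points); (4) for any $i\ne j$, $\pi(a_ia_j)$ has no fixed points.
   Context: $G_{m,k}=\langle a_1,\dots,a_{m+k+1}\mid [a_i,a_{i+1}]=1\ (1\le i\le m),\ a_{m+j+1}^{-1}a_ja_{m+j+1}=a_{m+j}\ (1\le j\le k)\rangle$, and $G_{m,0}\subset G_{m,1}\subset\dots\subset G_{m,m}$ via the obvious inclusions on generators. Let $H_n=\{0,1\}^n$, identified with a subset of $H_{n+1}$ by appending a last coordinate $0$, and let $H_n^*\subset H_{n+1}$ be the tuples with last coordinate $1$, so $H_{n+1}=H_n\sqcup H_n^*$. Let $\beta_i$ be the map flipping the $i$-th coordinate (fixing others), and $\varphi_{k,m+k}$ the map swapping the $k$-th and $(m+k)$-th coordinates. A right action is given by a map $\pi$ with $\pi(gh)=\pi(h)\pi(g)$ (composition of permutations). Define $\pi$ inductively: on $H_{m+1}$, $\pi(a_i)=\beta_i$ for $i=1,\dots,m+1$. For $k=1,\dots,m$, having $\pi(a_1),\dots,\pi(a_{m+k})$ on $H_{m+k}$,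 set $\pi(a_{m+k+1})=\beta_{m+k+1}$ on $H_{m+k+1}$, and for $1\le j\le m+k$ set $\pi(a_j)|_{H_{m+k}^*}=\beta_{m+k+1}\circ\varphi_{k,m+k}\circ\pi(a_j)|_{H_{m+k}}\circ\varphi_{k,m+k}\circ\beta_{m+k+1}$. These rules give a well-defined right action of $G_{m,m}$ on $H_{2m+1}$, restricting to an action of $G_{m,k}$ on $H_{m+k+1}$. *)

theory Defs
  imports Main
begin

text \<open>Points of H_n = {0,1}^n are modelled as functions nat => bool whose support
  lies in {1..n} (coordinate c is v c, with True = 1). Thus H_n is literally a subset
  of H_(n+1) (last coordinate 0), and H_(n+1) - H_n are the tuples with last coordinate 1.\<close>

definition H :: "nat \<Rightarrow> (nat \<Rightarrow> bool) set" where
  "H n = {v. \<forall>c. v c \<longrightarrow> c \<in> {1..n}}"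

definition flip :: "nat \<Rightarrow> (nat \<Rightarrow> bool) \<Rightarrow> (nat \<Rightarrow> bool)" where
  "flip i v = v(i := \<not> v i)"

definition swapc :: "nat \<Rightarrow> nat \<Rightarrow> (nat \<Rightarrow> bool) \<Rightarrow> (nat \<Rightarrow> bool)" where
  "swapc a b v = v(a := v b, b := v a)"

text \<open>act m n i = pi(a_i) as a map on H_n, for m+1 <= n <= 2m+1 and 1 <= i <= n,
  following the inductive construction (n = m+k+1, so k = n-1-m and m+k = n-1).\<close>
function act :: "nat \<Rightarrow> nat \<Rightarrow> nat \<Rightarrow> (nat \<Rightarrow> bool) \<Rightarrow> (nat \<Rightarrow> bool)" where
  "act m n i v =
     (if n \<le> m + 1 then flip i v
      else if i = n then flip n v
      else if \<not> v n then act m (n - 1) i v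
      else (flip n \<circ> swapc (n - 1 - m) (n - 1) \<circ> act m (n - 1) i
              \<circ> swapc (n - 1 - m) (n - 1) \<circ> flip n) v)"
  by pat_completeness auto
termination by (relation "measure (\<lambda>(m, n, i, v). n)") auto

definition pi :: "nat \<Rightarrow> nat \<Rightarrow> (nat \<Rightarrow> bool) \<Rightarrow> (nat \<Rightarrow> bool)" where
  "pi m i = act m (2 * m + 1) i"

text \<open>Orbit relation of the subgroup generated by pi(a_i), i in I, on the set X:
  equivalence closure of v ~ pi(a_i) v (generators and their inverses).\<close>
definition orbit_rel :: "nat \<Rightarrow> nat set \<Rightarrow> (nat \<Rightarrow> bool) set \<Rightarrow> ((nat \<Rightarrow> bool) \<times> (nat \<Rightarrow> bool)) set" where
  "orbit_rel m I X = (let R = {(v, pi m i v) | v i. v \<in> X \<and> i \<in> I} in (R \<union> R\<inverse>)\<^sup>*)"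

end

theory Submission
  imports Defs
begin

declare act.simps[simp del]

lemma act_base: "n \<le> m + 1 \<Longrightarrow> act m n i v = flip i v"
  by (subst act.simps) simp

lemma act_top: "act m n n v = flip n v"
  by (subst act.simps) simp

lemma act_low: "\<not> n \<le> m + 1 \<Longrightarrow> i \<noteq> n \<Longrightarrow> \<not> v n \<Longrightarrow> act m n i v = act m (n - 1) i v"
  by (subst act.simps) simp

lemma act_high: "\<not> n \<le> m + 1 \<Longrightarrow> i \<noteq> n \<Longrightarrow> v n \<Longrightarrow>
  act m n i v = flip n (swapc (n - 1 - m) (n - 1) (act m (n - 1) i (swapc (n - 1 - m) (n - 1) (flip n v))))"
  by (subst act.simps) simp

lemma flip_flip[simp]: "flip c (flip c v) = v"
  by (auto simp: flip_def fun_eq_iff)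

lemma swap_swap[simp]: "swapc a b (swapc a b v) = v"
  by (auto simp: swapc_def fun_eq_iff)

lemma swap_flip: "swapc a b (flip c v) = flip (if c = a then b else if c = b then a else c) (swapc a b v)"
  by (auto simp: swapc_def flip_def fun_eq_iff)

lemma flip_comm: "flip c (flip d v) = flip d (flip c v)"
  by (auto simp: flip_def fun_eq_iff)

lemma act_flip: "1 \<le> i \<Longrightarrow> i \<le> n \<Longrightarrow>
   \<exists>c. act m n i v = flip c v \<and> 1 \<le> c \<and> c \<le> n \<and> (c = n \<longleftrightarrow> i = n)"
proof (induction n arbitrary: v)
  case 0
  then show ?case by simp
next
  case (Suc n)
  show ?case
  proof (cases "Suc n \<le> m + 1")
    case True
    then show ?thesis using Suc.prems by (auto simp: act_base)
  next
    case nb: False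
    show ?thesis
    proof (cases "i = Suc n")
      case True
      then show ?thesis by (auto simp: act_top)
    next
      case ni: False
      hence iln: "i \<le> n" using Suc.prems by simp
      show ?thesis
      proof (cases "v (Suc n)")
        case False
        then obtain c where "act m n i v = flip c v" "1 \<le> c" "c \<le> n"
          using Suc.IH[OF Suc.prems(1) iln] by blast
        then show ?thesis using act_low[of "Suc n" m i v, OF nb ni False] ni by (intro exI[of _ c]) auto
      next
        case True
        define a where "a = n - m"
        define u where "u = swapc a n (flip (Suc n) v)"
        obtain c where c: "act m n i u = flip c u" "1 \<le> c" "c \<le> n"
          using Suc.IH[OF Suc.prems(1) iln] by blast
        define d where "d = (if c = a then n else if c = n then a else c)"
        have a1: "1 \<le> a" "a \<le> n" using nb unfolding a_def by auto
        have "act m (Suc n) i v = flip (Suc n) (swapc a n (flip c u))"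
          using act_high[of "Suc n" m i v, OF nb ni True] c(1) by (simp add: a_def u_def)
        also have "\<dots> = flip (Suc n) (flip d (flip (Suc n) v))"
          by (simp add: swap_flip u_def d_def)
        also have "\<dots> = flip d v" by (simp add: flip_comm[of "Suc n" d])
        finally have e: "act m (Suc n) i v = flip d v" .
        have "1 \<le> d" "d \<le> n" using c(2,3) a1 by (auto simp: d_def)
        then show ?thesis using e ni by (intro exI[of _ d]) auto
      qed
    qed
  qed
qed

lemma act_inv: "1 \<le> i \<Longrightarrow> i \<le> n \<Longrightarrow> act m n i (act m n i v) = v"
proof (induction n arbitrary: v)
  case 0
  then show ?case by simp
next
  case (Suc n)
  show ?case
  proof (cases "Suc n \<le> m + 1")
    case True
    then show ?thesis by (simp add: act_base)
  next
    case nb: False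
    show ?thesis
    proof (cases "i = Suc n")
      case True
      then show ?thesis by (simp add: act_top)
    next
      case ni: False
      hence iln: "i \<le> n" using Suc.prems by simp
      obtain c where c: "act m (Suc n) i v = flip c v" "c \<noteq> Suc n"
        using act_flip[OF Suc.prems, of m v] ni by blast
      have wn: "act m (Suc n) i v (Suc n) = v (Suc n)"
        using c by (simp add: flip_def)
      show ?thesis
      proof (cases "v (Suc n)")
        case False
        have "act m (Suc n) i (act m (Suc n) i v) = act m n i (act m n i v)"
          using act_low[of "Suc n" m i v, OF nb ni False] act_low[of "Suc n" m i "act m (Suc n) i v", OF nb ni] wn False
          by simp
        then show ?thesis using Suc.IH[OF Suc.prems(1) iln] by simp
      next
        case True
        show ?thesis
          using act_high[of "Suc n" m i v, OF nb ni True] act_high[of "Suc n" m i "act m (Suc n) i v", OF nb ni] wn True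
            Suc.IH[OF Suc.prems(1) iln] by simp
      qed
    qed
  qed
qed

lemma act_distinct: "1 \<le> i \<Longrightarrow> i \<le> n \<Longrightarrow> 1 \<le> j \<Longrightarrow> j \<le> n \<Longrightarrow> i \<noteq> j \<Longrightarrow>
   act m n i v \<noteq> act m n j v"
proof (induction n arbitrary: v)
  case 0
  then show ?case by simp
next
  case (Suc n)
  have fl: "flip a v \<noteq> flip b v" if "a \<noteq> b" for a b
  proof
    assume "flip a v = flip b v"
    hence "flip a v a = flip b v a" by simp
    thus False using that by (simp add: flip_def)
  qed
  show ?case
  proof (cases "Suc n \<le> m + 1")
    case True
    then show ?thesis using Suc.prems fl by (simp add: act_base)
  next
    case nb: False
    show ?thesis
    proof (cases "i = Suc n \<or> j = Suc n")
      case True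
      then show ?thesis
      proof
        assume ii: "i = Suc n"
        obtain c where "act m (Suc n) j v = flip c v" "c \<noteq> Suc n"
          using act_flip[OF Suc.prems(3,4), of m v] ii Suc.prems(5) by blast
        then show ?thesis using ii fl[of "Suc n" c] by (simp add: act_top)
      next
        assume jj: "j = Suc n"
        obtain c where "act m (Suc n) i v = flip c v" "c \<noteq> Suc n"
          using act_flip[OF Suc.prems(1,2), of m v] jj Suc.prems(5) by blast
        then show ?thesis using jj fl[of c "Suc n"] by (simp add: act_top)
      qed
    next
      case False
      hence ni: "i \<noteq> Suc n" and nj: "j \<noteq> Suc n" by auto
      have iln: "i \<le> n" and jln: "j \<le> n" using Suc.prems ni nj by auto
      note IH = Suc.IH[OF Suc.prems(1) iln Suc.prems(3) jln Suc.prems(5)]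
      show ?thesis
      proof (cases "v (Suc n)")
        case False
        then show ?thesis using act_low[of "Suc n" m i v, OF nb ni False] act_low[of "Suc n" m j v, OF nb nj False] IH by simp
      next
        case True
        show ?thesis
        proof
          assume "act m (Suc n) i v = act m (Suc n) j v"
          hence "swapc (Suc n - 1 - m) (Suc n - 1) (flip (Suc n) (act m (Suc n) i v)) =
                 swapc (Suc n - 1 - m) (Suc n - 1) (flip (Suc n) (act m (Suc n) j v))" by simp
          thus False using act_high[of "Suc n" m i v, OF nb ni True] act_high[of "Suc n" m j v, OF nb nj True] IH by simp
        qed
      qed
    qed
  qed
qed

lemma act_reduce: "v \<in> H n \<Longrightarrow> i \<le> n \<Longrightarrow> max n (m + 1) \<le> N \<Longrightarrow>
   act m N i v = act m (max n (m + 1)) i v"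
proof (induction N)
  case 0
  then show ?case by simp
next
  case (Suc N)
  show ?case
  proof (cases "Suc N = max n (m + 1)")
    case True
    then show ?thesis by simp
  next
    case False
    have lt: "max n (m + 1) \<le> N" using Suc.prems(3) False by (auto simp: max_def split: if_splits)
    have nb: "\<not> Suc N \<le> m + 1" and ni: "i \<noteq> Suc N" using lt Suc.prems by auto
    have "\<not> v (Suc N)" using Suc.prems(1) lt by (auto simp: H_def)
    then show ?thesis using act_low[of "Suc N" m i v, OF nb ni] Suc.IH[OF Suc.prems(1,2) lt] by simp
  qed
qed

lemma H_mono: "n \<le> n' \<Longrightarrow> H n \<subseteq> H n'"
  by (auto simp: H_def)

lemma orbit_mono: "n \<le> n' \<Longrightarrow> orbit_rel m {1..n} (H n) \<subseteq> orbit_rel m {1..n'} (H n')"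
proof -
  assume nn: "n \<le> n'"
  have R: "{(v, pi m i v) | v i. v \<in> H n \<and> i \<in> {1..n}} \<subseteq> {(v, pi m i v) | v i. v \<in> H n' \<and> i \<in> {1..n'}}"
  proof
    fix x assume "x \<in> {(v, pi m i v) | v i. v \<in> H n \<and> i \<in> {1..n}}"
    then obtain v i where "x = (v, pi m i v)" "v \<in> H n" "i \<in> {1..n}" by blast
    moreover have "v \<in> H n'" using H_mono[OF nn] \<open>v \<in> H n\<close> by blast
    moreover have "i \<in> {1..n'}" using \<open>i \<in> {1..n}\<close> nn by simp
    ultimately show "x \<in> {(v, pi m i v) | v i. v \<in> H n' \<and> i \<in> {1..n'}}" by blast
  qed
  show ?thesis unfolding orbit_rel_def Let_def
    by (rule rtrancl_mono, rule Un_mono, rule R, rule converse_mono[THEN iffD2], rule R)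
qed

lemma orbit_step: "u \<in> H n \<Longrightarrow> i \<in> {1..n} \<Longrightarrow> (u, pi m i u) \<in> orbit_rel m {1..n} (H n)"
  unfolding orbit_rel_def Let_def apply (rule r_into_rtrancl) apply (rule UnI1) by auto

lemma orbit_sym: "(v, w) \<in> orbit_rel m I X \<Longrightarrow> (w, v) \<in> orbit_rel m I X"
proof -
  assume a: "(v, w) \<in> orbit_rel m I X"
  define R where "R = {(v, pi m i v) | v i. v \<in> X \<and> i \<in> I}"
  have "(w, v) \<in> ((R \<union> R\<inverse>)\<inverse>)\<^sup>*"
    using a unfolding orbit_rel_def Let_def R_def[symmetric] by (rule rtrancl_converseI)
  moreover have "(R \<union> R\<inverse>)\<inverse> = R \<union> R\<inverse>" by auto
  ultimately show ?thesis unfolding orbit_rel_def Let_def R_def[symmetric] by simp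
qed

lemma connected0: "n \<le> 2 * m + 1 \<Longrightarrow> v \<in> H n \<Longrightarrow> (v, \<lambda>_. False) \<in> orbit_rel m {1..n} (H n)"
proof (induction n arbitrary: v)
  case 0
  hence "v = (\<lambda>_. False)" by (auto simp: H_def fun_eq_iff)
  then show ?case by (simp add: orbit_rel_def)
next
  case (Suc n)
  have mono: "orbit_rel m {1..n} (H n) \<subseteq> orbit_rel m {1..Suc n} (H (Suc n))"
    by (rule orbit_mono) simp
  show ?case
  proof (cases "v (Suc n)")
    case False
    hence "v \<in> H n" using Suc.prems(2) by (auto simp: H_def le_Suc_eq)
    then show ?thesis using Suc.IH[of v] Suc.prems mono by auto
  next
    case True
    define u where "u = flip (Suc n) v"
    have uH: "u \<in> H n" using Suc.prems(2) True by (auto simp: H_def u_def flip_def le_Suc_eq)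
    have uH': "u \<in> H (Suc n)" using uH H_mono[of n "Suc n"] by auto
    have "pi m (Suc n) u = act m (max (Suc n) (m + 1)) (Suc n) u"
      unfolding pi_def using Suc.prems(1) by (intro act_reduce[OF uH']) auto
    also have "\<dots> = v"
      by (cases "Suc n \<le> m + 1") (auto simp: act_base act_top max_def u_def)
    finally have pu: "pi m (Suc n) u = v" .
    have "(u, v) \<in> orbit_rel m {1..Suc n} (H (Suc n))"
      using orbit_step[OF uH', of "Suc n" m] pu by simp
    hence vu: "(v, u) \<in> orbit_rel m {1..Suc n} (H (Suc n))" by (rule orbit_sym)
    have "(u, \<lambda>_. False) \<in> orbit_rel m {1..Suc n} (H (Suc n))"
      using Suc.IH[OF _ uH] Suc.prems(1) mono by auto
    then show ?thesis using vu unfolding orbit_rel_def Let_def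
      by (rule rtrancl_trans[rotated])
  qed
qed

theorem proposition6p1:
  fixes m :: nat
  assumes "m \<ge> 1"
  shows "(\<forall>k \<le> m. \<forall>v \<in> H (m + k + 1). \<forall>w \<in> H (m + k + 1).
            (v, w) \<in> orbit_rel m {1..m + k + 1} (H (m + k + 1)))
       \<and> (\<forall>i \<in> {1..2 * m + 1}. \<forall>v \<in> H (2 * m + 1). pi m i (pi m i v) = v)
       \<and> (\<forall>i \<in> {1..2 * m + 1}. \<forall>v \<in> H (2 * m + 1).
            card {c \<in> {1..2 * m + 1}. pi m i v c \<noteq> v c} = 1 \<and> pi m i v \<noteq> v)
       \<and> (\<forall>i \<in> {1..2 * m + 1}. \<forall>j \<in> {1..2 * m + 1}. i \<noteq> j \<longrightarrow>
            (\<forall>v \<in> H (2 * m + 1). pi m j (pi m i v) \<noteq> v))"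
proof (intro conjI ballI allI impI)
  fix k v w assume k: "k \<le> m" and v: "v \<in> H (m + k + 1)" and w: "w \<in> H (m + k + 1)"
  have "(v, \<lambda>_. False) \<in> orbit_rel m {1..m + k + 1} (H (m + k + 1))"
    using connected0 k v by simp
  moreover have "(\<lambda>_. False, w) \<in> orbit_rel m {1..m + k + 1} (H (m + k + 1))"
    using connected0[of "m + k + 1" m w] k w by (simp add: orbit_sym)
  ultimately show "(v, w) \<in> orbit_rel m {1..m + k + 1} (H (m + k + 1))"
    unfolding orbit_rel_def Let_def by (rule rtrancl_trans)
next
  fix i v assume "i \<in> {1..2 * m + 1}"
  then show "pi m i (pi m i v) = v" unfolding pi_def by (intro act_inv) auto
next
  fix i v assume i: "i \<in> {1..2 * m + 1}"
  obtain c where c: "pi m i v = flip c v" "1 \<le> c" "c \<le> 2 * m + 1"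
    using act_flip[of i "2 * m + 1" m v] i unfolding pi_def by auto
  have "{c' \<in> {1..2 * m + 1}. pi m i v c' \<noteq> v c'} = {c}"
    using c by (auto simp: flip_def)
  then show "card {c \<in> {1..2 * m + 1}. pi m i v c \<noteq> v c} = 1" by simp
  show "pi m i v \<noteq> v"
  proof
    assume "pi m i v = v"
    hence "pi m i v c = v c" by simp
    thus False using c by (simp add: flip_def)
  qed
next
  fix i j v assume i: "i \<in> {1..2 * m + 1}" and j: "j \<in> {1..2 * m + 1}" and ij: "i \<noteq> j"
  show "pi m j (pi m i v) \<noteq> v"
  proof
    assume "pi m j (pi m i v) = v"
    hence "pi m j (pi m j (pi m i v)) = pi m j v" by simp
    hence "pi m i v = pi m j v" using j unfolding pi_def by (simp add: act_inv)
    thus False using act_distinct[of i "2 * m + 1" j m v] i j ij unfolding pi_def by auto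
  qed
qed

end
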